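(* For every $n \ge 1$, $$ B^+_n(x) = 2(n-1)x\, B^+_{n-1}(x) + 2x(1-x) \frac{d B^+_{n-1}}{dx}(x) + B_{n-1}(x). $$ Moreover, as formal power series in $t$, $$ \sum_{n \ge 0} B^+_n(x) \frac{t^n}{n!} = \frac{e^t (e^{xt} - x e^t)}{e^{2xt} - x e^{2t}} \quad\text{and}\quad \sum_{n \ge 0} B^-_n(x) \frac{t^n}{n!} = \frac{x e^t (e^t - e^{xt})}{e^{2xt} - x e^{2t}}. $$
   Context: A signed permutation of $[n]$ is a set $S = \{a_1, \dots, a_n\}$ with $a_i \in \{i, -i\}$, together with a bijection $w : S \to S$. $B_n$ is the set of all of them. - An index $i \in \{0, \dots, n-1\}$ is a $B$-descent if $w(a_i) > w(a_{i+1})$, with $w(a_0) = 0$; $\mathrm{des}_B(w)$ is the number of $B$-descents. - $B_n(x) = \sum_{w \in B_n} x^{\mathrm{des}_B(w)}$, with $B_0(x) = 1$. - $B^+_n(x)$ (resp. $B^-_n(x)$) is the same sum restricted to $w$ with $w(a_n) > 0$ (resp. $< 0$), with $B^+_0(x) = 1$ and $B^-_0(x) = 0$. *)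

theory Defs
  imports "HOL-Computational_Algebra.Computational_Algebra"
begin

text \<open>A signed permutation of [n] is a pair (a, w): a i \<in> {i, -i} for 1 \<le> i \<le> n
  (a i = 0 otherwise), i.e. S = a ` {1..n}; and w is a bijection S \<rightarrow> S
  (extended by 0 outside S so that the set of them is finite).\<close>
definition signed_perms :: "nat \<Rightarrow> ((nat \<Rightarrow> int) \<times> (int \<Rightarrow> int)) set" where
  "signed_perms n = {(a, w).
      (\<forall>i\<in>{1..n}. a i = int i \<or> a i = - int i) \<and> (\<forall>i. i \<notin> {1..n} \<longrightarrow> a i = 0) \<and>
      bij_betw w (a ` {1..n}) (a ` {1..n}) \<and> (\<forall>x. x \<notin> a ` {1..n} \<longrightarrow> w x = 0)}"

definition wval :: "(nat \<Rightarrow> int) \<times> (int \<Rightarrow> int) \<Rightarrow> nat \<Rightarrow> int" where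
  "wval p i = (if i = 0 then 0 else snd p (fst p i))"

definition desB :: "nat \<Rightarrow> (nat \<Rightarrow> int) \<times> (int \<Rightarrow> int) \<Rightarrow> nat" where
  "desB n p = card {i \<in> {0..<n}. wval p i > wval p (Suc i)}"

definition Bpoly :: "nat \<Rightarrow> int poly" where
  "Bpoly n = (\<Sum>p\<in>signed_perms n. monom 1 (desB n p))"

definition Bplus :: "nat \<Rightarrow> int poly" where
  "Bplus n = (if n = 0 then 1 else (\<Sum>p\<in>{p\<in>signed_perms n. wval p n > 0}. monom 1 (desB n p)))"

definition Bminus :: "nat \<Rightarrow> int poly" where
  "Bminus n = (if n = 0 then 0 else (\<Sum>p\<in>{p\<in>signed_perms n. wval p n < 0}. monom 1 (desB n p)))"

definition xF :: "int poly fract" where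
  "xF = to_fract [:0, 1:]"

definition egf :: "(nat \<Rightarrow> int poly) \<Rightarrow> int poly fract fps" where
  "egf P = Abs_fps (\<lambda>n. to_fract (P n) / fact n)"

end

theory Submission
  imports Defs
begin

definition W :: "nat \<Rightarrow> int list set" where
  "W n = {u. length u = n \<and> distinct (map abs u) \<and> set (map abs u) = int ` {1..n}}"

definition word :: "nat \<Rightarrow> (nat\<Rightarrow>int)\<times>(int\<Rightarrow>int) \<Rightarrow> int list" where
  "word n p = map (\<lambda>i. snd p (fst p i)) [1..<Suc n]"

lemma length_word[simp]: "length (word n p) = n" by (simp add: word_def)

lemma word_in_W:
  assumes "p \<in> signed_perms n" shows "word n p \<in> W n"
proof -
  obtain a w where p: "p = (a,w)" by (cases p)
  have a1: "\<forall>i\<in>{1..n}. a i = int i \<or> a i = - int i" and bw: "bij_betw w (a ` {1..n}) (a ` {1..n})"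
    using assms p by (auto simp: signed_perms_def)
  have absa: "abs (a i) = int i" if "i \<in> {1..n}" for i using a1 that by fastforce
  have inja: "inj_on a {1..n}" by (rule inj_onI) (metis absa of_nat_eq_iff)
  have injw: "inj_on w (a ` {1..n})" using bw bij_betw_def by blast
  have wS: "w (a i) \<in> a ` {1..n}" if "i \<in> {1..n}" for i using bw that bij_betwE by blast
  have absw: "abs (w (a i)) \<in> int ` {1..n}" if "i \<in> {1..n}" for i
    using wS[OF that] absa by auto
  have L: "map abs (word n p) = map (\<lambda>i. abs (w (a i))) [1..<Suc n]"
    by (simp add: word_def p)
  have injc: "inj_on (\<lambda>i. abs (w (a i))) {1..n}"
  proof (rule inj_onI)
    fix i j assume i: "i \<in> {1..n}" and j: "j \<in> {1..n}" and e: "abs (w (a i)) = abs (w (a j))"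
    obtain k where k: "k \<in> {1..n}" "w (a i) = a k" using wS[OF i] by auto
    obtain l where l: "l \<in> {1..n}" "w (a j) = a l" using wS[OF j] by auto
    have "k = l" using e k l absa by auto
    hence "w (a i) = w (a j)" using k l by simp
    hence "a i = a j" using injw i j by (auto dest: inj_onD)
    thus "i = j" using inja i j by (auto dest: inj_onD)
  qed
  have d: "distinct (map abs (word n p))" unfolding L distinct_map
    using injc by (simp only: set_upt atLeastLessThanSuc_atLeastAtMost distinct_upt)
  have s1: "set (map abs (word n p)) \<subseteq> int ` {1..n}" unfolding L using absw by auto
  have "card (set (map abs (word n p))) = n" using distinct_card[OF d] by (simp add: length_word)
  hence "set (map abs (word n p)) = int ` {1..n}"
    using s1 by (metis card_atLeastAtMost card_image card_subset_eq diff_Suc_1 finite_imageI finite_atLeastAtMost inj_of_nat inj_on_subset subset_UNIV)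
  thus ?thesis using d by (simp add: W_def)
qed

lemma set_word:
  assumes "(a,w) \<in> signed_perms n" shows "set (word n (a,w)) = a ` {1..n}"
proof -
  have bw: "bij_betw w (a ` {1..n}) (a ` {1..n})" using assms by (auto simp: signed_perms_def)
  have "set (word n (a,w)) = w ` a ` {1..n}" by (auto simp: word_def)
  also have "\<dots> = a ` {1..n}" using bw by (simp add: bij_betw_def)
  finally show ?thesis .
qed

lemma nth_word: "i < n \<Longrightarrow> word n p ! i = snd p (fst p (Suc i))"
  by (simp add: word_def del: upt_Suc)

lemma inj_word: "inj_on (word n) (signed_perms n)"
proof (rule inj_onI)
  fix p q assume p: "p \<in> signed_perms n" and q: "q \<in> signed_perms n" and e: "word n p = word n q"
  obtain a w where pa: "p = (a,w)" by (cases p)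
  obtain b v where qb: "q = (b,v)" by (cases q)
  have a1: "\<forall>i\<in>{1..n}. a i = int i \<or> a i = - int i" "\<forall>i. i \<notin> {1..n} \<longrightarrow> a i = 0"
     "\<forall>x. x \<notin> a ` {1..n} \<longrightarrow> w x = 0"
    using p pa by (auto simp: signed_perms_def)
  have b1: "\<forall>i\<in>{1..n}. b i = int i \<or> b i = - int i" "\<forall>i. i \<notin> {1..n} \<longrightarrow> b i = 0"
     "\<forall>x. x \<notin> b ` {1..n} \<longrightarrow> v x = 0"
    using q qb by (auto simp: signed_perms_def)
  have S: "a ` {1..n} = b ` {1..n}" using set_word[of a w n] set_word[of b v n] p q pa qb e by simp
  have ab: "a = b"
  proof
    fix i show "a i = b i"
    proof (cases "i \<in> {1..n}")
      case True
      then obtain k where k: "k \<in> {1..n}" "a i = b k" using S by blast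
      have "abs (a i) = int i" using a1 True by fastforce
      moreover have "abs (b k) = int k" using b1 k by fastforce
      ultimately have "k = i" using k by simp
      thus ?thesis using k by simp
    next
      case False thus ?thesis using a1 b1 by simp
    qed
  qed
  have wv: "w = v"
  proof
    fix x show "w x = v x"
    proof (cases "x \<in> a ` {1..n}")
      case True
      then obtain i where i: "i \<in> {1..n}" "x = a i" by blast
      have "word n p ! (i - 1) = word n q ! (i - 1)" using e by simp
      moreover have "i - 1 < n" "Suc (i - 1) = i" using i by auto
      ultimately show ?thesis using i ab nth_word[of "i-1" n p] nth_word[of "i-1" n q] pa qb by simp
    next
      case False thus ?thesis using a1 b1 ab by simp
    qed
  qed
  show "p = q" using ab wv pa qb by simp
qed

lemma distinct_map_eq: "distinct (map f xs) \<Longrightarrow> x \<in> set xs \<Longrightarrow> y \<in> set xs \<Longrightarrow> f x = f y \<Longrightarrow> x = y"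
  by (auto simp: distinct_map dest: inj_onD)

lemma word_surj:
  assumes u: "u \<in> W n" shows "\<exists>p\<in>signed_perms n. word n p = u"
proof -
  have len: "length u = n" and du: "distinct (map abs u)" and su: "set (map abs u) = int ` {1..n}"
    using u by (auto simp: W_def)
  have ex: "\<exists>!x. x \<in> set u \<and> abs x = int i" if "i \<in> {1..n}" for i
  proof -
    have "int i \<in> set (map abs u)" using su that by auto
    then obtain x where x: "x \<in> set u" "abs x = int i" by auto
    show ?thesis by (rule ex1I[of _ x]) (use x distinct_map_eq[OF du] in auto)
  qed
  define a where "a i = (if i \<in> {1..n} then (THE x. x \<in> set u \<and> abs x = int i) else 0)" for i
  define w where "w x = (if x \<in> set u then u ! (nat (abs x) - 1) else 0)" for x
  have aP: "a i \<in> set u \<and> abs (a i) = int i" if "i \<in> {1..n}" for i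
    using theI'[OF ex[OF that]] that by (simp add: a_def)
  have absu: "abs x \<in> int ` {1..n}" if "x \<in> set u" for x using su that by auto
  have Sa: "a ` {1..n} = set u"
  proof
    show "a ` {1..n} \<subseteq> set u" using aP by auto
    show "set u \<subseteq> a ` {1..n}"
    proof
      fix x assume x: "x \<in> set u"
      then obtain i where i: "i \<in> {1..n}" "abs x = int i" using absu by blast
      have "a i = x" using aP[OF i(1)] x i distinct_map_eq[OF du] by auto
      thus "x \<in> a ` {1..n}" using i by auto
    qed
  qed
  have dist_u: "distinct u" using du by (simp add: distinct_map)
  have widx: "nat (abs x) - 1 < n" if "x \<in> set u" for x using absu[OF that] by auto
  have wS: "w ` set u \<subseteq> set u" using widx len by (auto simp: w_def)
  have wi: "inj_on w (set u)"
  proof (rule inj_onI)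
    fix x y assume x: "x \<in> set u" and y: "y \<in> set u" and e: "w x = w y"
    have "u ! (nat (abs x) - 1) = u ! (nat (abs y) - 1)" using e x y by (simp add: w_def)
    hence "nat (abs x) - 1 = nat (abs y) - 1" using dist_u widx[OF x] widx[OF y] len
      by (simp add: nth_eq_iff_index_eq)
    hence "abs x = abs y" using absu[OF x] absu[OF y] by auto
    thus "x = y" using distinct_map_eq[OF du x y] by simp
  qed
  have bw: "bij_betw w (set u) (set u)"
    using endo_inj_surj[OF _ wS wi] wi by (simp add: bij_betw_def)
  have mem: "(a, w) \<in> signed_perms n"
  proof -
    have "\<forall>i\<in>{1..n}. a i = int i \<or> a i = - int i"
    proof
      fix i assume "i \<in> {1..n}"
      then have "abs (a i) = int i" using aP by blast
      thus "a i = int i \<or> a i = - int i" by linarith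
    qed
    moreover have "\<forall>i. i \<notin> {1..n} \<longrightarrow> a i = 0" by (simp add: a_def)
    moreover have "\<forall>x. x \<notin> a ` {1..n} \<longrightarrow> w x = 0" using Sa by (simp add: w_def)
    ultimately show ?thesis using bw Sa by (simp add: signed_perms_def)
  qed
  have "word n (a,w) = u"
  proof (rule nth_equalityI)
    show "length (word n (a,w)) = length u" using len by (simp add: word_def)
    fix i assume "i < length (word n (a,w))"
    hence i: "i < n" by simp
    have "Suc i \<in> {1..n}" using i by simp
    hence "a (Suc i) \<in> set u" "nat (abs (a (Suc i))) = Suc i" using aP by auto
    hence "w (a (Suc i)) = u ! i" by (simp add: w_def)
    thus "word n (a,w) ! i = u ! i" using i by (simp add: nth_word)
  qed
  thus ?thesis using mem by blast
qed

lemma bij_word: "bij_betw (word n) (signed_perms n) (W n)"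
  unfolding bij_betw_def using inj_word word_in_W word_surj by blast

fun dc :: "int list \<Rightarrow> nat" where
  "dc (a # b # r) = (if b < a then 1 else 0) + dc (b # r)"
| "dc _ = 0"

lemma dc_card: "dc L = card {i. Suc i < length L \<and> L ! (Suc i) < L ! i}"
proof (induction L rule: dc.induct)
  case (1 a b r)
  have e: "{i. Suc i < length (a # b # r) \<and> (a # b # r) ! (Suc i) < (a # b # r) ! i}
      = (if b < a then {0} else {}) \<union> Suc ` {i. Suc i < length (b # r) \<and> (b # r) ! (Suc i) < (b # r) ! i}"
    (is "?L = ?R")
  proof
    show "?L \<subseteq> ?R"
    proof
      fix i assume "i \<in> ?L" thus "i \<in> ?R" by (cases i) auto
    qed
    show "?R \<subseteq> ?L" by auto
  qed
  have "card ?R = (if b < a then 1 else 0) + card {i. Suc i < length (b # r) \<and> (b # r) ! (Suc i) < (b # r) ! i}"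
    by (simp add: card_image)
  thus ?case using 1 e by simp
next
  case "2_1" thus ?case by simp
next
  case "2_2" thus ?case by simp
qed

lemma wval_word: "p \<in> signed_perms n \<Longrightarrow> i \<le> n \<Longrightarrow> wval p i = (0 # word n p) ! i"
  by (cases i) (auto simp: wval_def nth_word)

lemma desB_word: assumes "p \<in> signed_perms n" shows "desB n p = dc (0 # word n p)"
proof -
  have "{i \<in> {0..<n}. wval p i > wval p (Suc i)}
       = {i. Suc i < length (0 # word n p) \<and> (0 # word n p) ! (Suc i) < (0 # word n p) ! i}"
    using wval_word[OF assms] by auto
  thus ?thesis by (simp add: desB_def dc_card)
qed

lemma wval_last: "p \<in> signed_perms n \<Longrightarrow> n \<ge> 1 \<Longrightarrow> wval p n = last (word n p)"
proof -
  assume a: "p \<in> signed_perms n" "n \<ge> 1"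
  hence "word n p \<noteq> []" by (metis length_word list.size(3) not_one_le_zero)
  thus ?thesis using wval_word[of p n n] a by (simp add: last_conv_nth)
qed

lemma Bpoly_W: "Bpoly n = (\<Sum>u\<in>W n. monom 1 (dc (0 # u)))"
proof -
  have "Bpoly n = (\<Sum>p\<in>signed_perms n. monom 1 (dc (0 # word n p)))"
    unfolding Bpoly_def by (rule sum.cong) (auto simp: desB_word)
  also have "\<dots> = (\<Sum>u\<in>W n. monom 1 (dc (0 # u)))"
    by (rule sum.reindex_bij_betw[OF bij_word, of "\<lambda>u. monom 1 (dc (0 # u))"])
  finally show ?thesis .
qed

lemma finite_W: "finite (W n)"
proof -
  have "W n \<subseteq> {u. set u \<subseteq> {-int n..int n} \<and> length u = n}"
  proof
    fix u assume u: "u \<in> W n"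
    have "set u \<subseteq> {-int n..int n}"
    proof
      fix x assume "x \<in> set u"
      hence "abs x \<in> int ` {1..n}" using u by (auto simp: W_def)
      thus "x \<in> {-int n..int n}" by auto
    qed
    thus "u \<in> {u. set u \<subseteq> {-int n..int n} \<and> length u = n}" using u by (simp add: W_def)
  qed
  thus ?thesis using finite_lists_length_eq[of "{-int n..int n}" n] finite_subset by blast
qed

lemma finite_sp: "finite (signed_perms n)"
  using bij_betw_finite[OF bij_word] finite_W by blast

lemma Bplus_W: "n \<ge> 1 \<Longrightarrow> Bplus n = (\<Sum>u\<in>W n. if last u > 0 then monom 1 (dc (0 # u)) else 0)"
proof -
  assume n: "n \<ge> 1"
  note fin = finite_sp[of n]
  have "Bplus n = (\<Sum>p\<in>signed_perms n. if wval p n > 0 then monom 1 (desB n p) else 0)"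
    unfolding Bplus_def using n fin by (simp add: sum.inter_filter)
  also have "\<dots> = (\<Sum>p\<in>signed_perms n. if last (word n p) > 0 then monom 1 (dc (0 # word n p)) else 0)"
    by (rule sum.cong[OF refl]) (simp add: desB_word wval_last[OF _ n])
  also have "\<dots> = (\<Sum>u\<in>W n. if last u > 0 then monom 1 (dc (0 # u)) else 0)"
    by (rule sum.reindex_bij_betw[OF bij_word, of "\<lambda>u. if last u > 0 then monom 1 (dc (0 # u)) else 0"])
  finally show ?thesis .
qed

lemma Bminus_W: "n \<ge> 1 \<Longrightarrow> Bminus n = (\<Sum>u\<in>W n. if last u < 0 then monom 1 (dc (0 # u)) else 0)"
proof -
  assume n: "n \<ge> 1"
  note fin = finite_sp[of n]
  have "Bminus n = (\<Sum>p\<in>signed_perms n. if wval p n < 0 then monom 1 (desB n p) else 0)"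
    unfolding Bminus_def using n fin by (simp add: sum.inter_filter)
  also have "\<dots> = (\<Sum>p\<in>signed_perms n. if last (word n p) < 0 then monom 1 (dc (0 # word n p)) else 0)"
    by (rule sum.cong[OF refl]) (simp add: desB_word wval_last[OF _ n])
  also have "\<dots> = (\<Sum>u\<in>W n. if last u < 0 then monom 1 (dc (0 # u)) else 0)"
    by (rule sum.reindex_bij_betw[OF bij_word, of "\<lambda>u. if last u < 0 then monom 1 (dc (0 # u)) else 0"])
  finally show ?thesis .
qed

lemma W_abs: "u \<in> W n \<Longrightarrow> x \<in> set u \<Longrightarrow> 1 \<le> abs x \<and> abs x \<le> int n"
  by (force simp: W_def)

lemma last_W: "u \<in> W n \<Longrightarrow> n \<ge> 1 \<Longrightarrow> last u \<noteq> 0"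
proof -
  assume u: "u \<in> W n" and n: "n \<ge> 1"
  hence "u \<noteq> []" by (auto simp: W_def)
  hence "last u \<in> set u" by simp
  thus ?thesis using W_abs[OF u] by fastforce
qed

lemma Bpoly_split: "n \<ge> 1 \<Longrightarrow> Bpoly n = Bplus n + Bminus n"
proof -
  assume n: "n \<ge> 1"
  have "Bplus n + Bminus n = (\<Sum>u\<in>W n. (if last u > 0 then monom 1 (dc (0 # u)) else 0)
        + (if last u < 0 then monom 1 (dc (0 # u)) else 0))"
    using n by (simp add: Bplus_W Bminus_W sum.distrib)
  also have "\<dots> = (\<Sum>u\<in>W n. monom 1 (dc (0 # u)))"
    by (rule sum.cong[OF refl]) (use last_W[OF _ n] in fastforce)
  finally show ?thesis by (simp add: Bpoly_W)
qed

definition ins :: "nat \<Rightarrow> nat \<Rightarrow> int \<Rightarrow> int list \<Rightarrow> int list" where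
  "ins n i s u = take i u @ [s * int n] @ drop i u"

lemma ins_W:
  assumes u: "u \<in> W m" and i: "i \<le> m" and s: "s \<in> {1, -1}"
  shows "ins (Suc m) i s u \<in> W (Suc m)"
proof -
  have len: "length u = m" and du: "distinct (map abs u)" and su: "set (map abs u) = int ` {1..m}"
    using u by (auto simp: W_def)
  have as: "abs (s * int (Suc m)) = int (Suc m)" using s by auto
  have M: "map abs (ins (Suc m) i s u) = map abs (take i u) @ [int (Suc m)] @ map abs (drop i u)"
    using as by (simp add: ins_def)
  have "map abs u = map abs (take i u) @ map abs (drop i u)"
    by (metis append_take_drop_id map_append)
  hence d2: "distinct (map abs (take i u) @ map abs (drop i u))" and
    s2: "set (map abs (take i u)) \<union> set (map abs (drop i u)) = int ` {1..m}"
    using du su by (metis, metis set_append)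
  have nin: "int (Suc m) \<notin> set (map abs (take i u)) \<union> set (map abs (drop i u))"
    using s2 by auto
  have "distinct (map abs (ins (Suc m) i s u))" using M d2 nin by auto
  moreover have "set (map abs (ins (Suc m) i s u)) = int ` {1..Suc m}"
  proof -
    have "set (map abs (ins (Suc m) i s u)) = int ` {1..m} \<union> {int (Suc m)}"
      unfolding M using s2 by auto
    also have "\<dots> = int ` {1..Suc m}" by (auto simp: atLeastAtMostSuc_conv)
    finally show ?thesis .
  qed
  moreover have "length (ins (Suc m) i s u) = Suc m" using len i by (simp add: ins_def)
  ultimately show ?thesis by (simp add: W_def)
qed

definition rem :: "nat \<Rightarrow> int list \<Rightarrow> nat \<times> int \<times> int list" where
  "rem n v = (let j = length (takeWhile (\<lambda>z. abs z \<noteq> int n) v) in (j, sgn (v ! j), take j v @ drop (Suc j) v))"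

lemma rem_ins:
  assumes u: "u \<in> W m" and i: "i \<le> m" and s: "s \<in> {1, -1}"
  shows "rem (Suc m) (ins (Suc m) i s u) = (i, s, u)"
proof -
  have len: "length u = m" using u by (simp add: W_def)
  have P: "\<forall>x\<in>set (take i u). abs x \<noteq> int (Suc m)" using W_abs[OF u] by (fastforce dest: in_set_takeD)
  have as: "abs (s * int (Suc m)) = int (Suc m)" using s by auto
  have tw: "takeWhile (\<lambda>z. abs z \<noteq> int (Suc m)) (ins (Suc m) i s u) = take i u"
    unfolding ins_def using P as by (simp add: takeWhile_append2)
  have lt: "length (take i u) = i" using len i by simp
  have nth: "ins (Suc m) i s u ! i = s * int (Suc m)"
    unfolding ins_def using lt by (simp add: nth_append)
  have sg: "sgn (s * int (Suc m)) = s" using s by (auto simp: sgn_mult)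
  have tk: "take i (ins (Suc m) i s u) @ drop (Suc i) (ins (Suc m) i s u) = u"
    unfolding ins_def using lt by simp
  show ?thesis unfolding rem_def Let_def tw lt nth sg tk by simp
qed

lemma ins_surj:
  assumes v: "v \<in> W (Suc m)"
  shows "\<exists>i s u. i \<le> m \<and> s \<in> {1, -1} \<and> u \<in> W m \<and> v = ins (Suc m) i s u"
proof -
  have len: "length v = Suc m" and dv: "distinct (map abs v)" and sv: "set (map abs v) = int ` {1..Suc m}"
    using v by (auto simp: W_def)
  have "int (Suc m) \<in> set (map abs v)" unfolding sv by (rule imageI) simp
  then obtain j where j: "j < length v" "abs (v ! j) = int (Suc m)"
    by (auto simp: in_set_conv_nth)
  define s where "s = sgn (v ! j)"
  define u where "u = take j v @ drop (Suc j) v"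
  have vj: "v ! j = s * int (Suc m)" using j unfolding s_def by (metis sgn_mult_abs)
  have s: "s \<in> {1, -1}" using j unfolding s_def by (auto simp: sgn_if)
  have lu: "length u = m" using j len by (simp add: u_def)
  have tu: "take j u = take j v" "drop j u = drop (Suc j) v" using j by (simp_all add: u_def)
  have ve: "v = ins (Suc m) j s u"
    unfolding ins_def tu vj[symmetric] using j by (simp add: id_take_nth_drop[symmetric])
  have M: "map abs v = map abs (take j v) @ [int (Suc m)] @ map abs (drop (Suc j) v)"
    using j by (metis append_Cons append_Nil id_take_nth_drop list.simps(9) map_append)
  have Mu: "map abs u = map abs (take j v) @ map abs (drop (Suc j) v)" by (simp add: u_def)
  have du: "distinct (map abs u)" and nin: "int (Suc m) \<notin> set (map abs u)"
    using dv unfolding M Mu by auto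
  have "set (map abs v) = insert (int (Suc m)) (set (map abs u))" unfolding M Mu by auto
  hence "set (map abs u) = set (map abs v) - {int (Suc m)}" using nin by (metis Diff_insert_absorb)
  hence "set (map abs u) = int ` {1..Suc m} - {int (Suc m)}" using sv by simp
  also have "\<dots> = int ` {1..m}" by (auto simp: atLeastAtMostSuc_conv)
  finally have "u \<in> W m" using du lu by (simp add: W_def)
  moreover have "j \<le> m" using j len by simp
  ultimately show ?thesis using ve s by blast
qed

lemma bij_ins: "bij_betw (\<lambda>(i, s, u). ins (Suc m) i s u) ({..m} \<times> {1, -1} \<times> W m) (W (Suc m))"
proof -
  have inj: "inj_on (\<lambda>(i, s, u). ins (Suc m) i s u) ({..m} \<times> {1, -1} \<times> W m)"
  proof (rule inj_onI)
    fix x y assume x: "x \<in> {..m} \<times> {1, -1} \<times> W m" and y: "y \<in> {..m} \<times> {1, -1} \<times> W m"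
      and e: "(\<lambda>(i, s, u). ins (Suc m) i s u) x = (\<lambda>(i, s, u). ins (Suc m) i s u) y"
    obtain i s u where xx: "x = (i, s, u)" by (cases x)
    obtain i' s' u' where yy: "y = (i', s', u')" by (cases y)
    have "rem (Suc m) (ins (Suc m) i s u) = rem (Suc m) (ins (Suc m) i' s' u')" using e xx yy by simp
    thus "x = y" using x y xx yy rem_ins by (metis SigmaE2 atMost_iff)
  qed
  have "(\<lambda>(i, s, u). ins (Suc m) i s u) ` ({..m} \<times> {1, -1} \<times> W m) = W (Suc m)"
  proof
    show "(\<lambda>(i, s, u). ins (Suc m) i s u) ` ({..m} \<times> {1, -1} \<times> W m) \<subseteq> W (Suc m)"
      using ins_W by auto
    show "W (Suc m) \<subseteq> (\<lambda>(i, s, u). ins (Suc m) i s u) ` ({..m} \<times> {1, -1} \<times> W m)"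
    proof
      fix v assume "v \<in> W (Suc m)"
      then obtain i s u where "i \<le> m" "s \<in> {1, -1}" "u \<in> W m" "v = ins (Suc m) i s u"
        using ins_surj by blast
      thus "v \<in> (\<lambda>(i, s, u). ins (Suc m) i s u) ` ({..m} \<times> {1, -1} \<times> W m)"
        by force
    qed
  qed
  thus ?thesis using inj by (simp add: bij_betw_def)
qed

lemma dc_append: "xs \<noteq> [] \<Longrightarrow> dc (xs @ z # zs) = dc xs + (if z < last xs then 1 else 0) + dc (z # zs)"
proof (induction xs rule: dc.induct)
  case (1 a b r) thus ?case by simp
next
  case ("2_1") thus ?case by simp
next
  case ("2_2" v) thus ?case by simp
qed

lemma last_take0: assumes "i \<le> length u" shows "last (0 # take i u) = (0 # u) ! i"
proof (cases i)
  case (Suc k)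
  hence k: "k < length u" using assms by simp
  hence "take i u \<noteq> []" using Suc by (cases u) auto
  moreover have "last (take i u) = u ! k" using k Suc by (simp add: take_Suc_conv_app_nth)
  ultimately show ?thesis using Suc by simp
qed simp

lemma dc_ins:
  assumes u: "u \<in> W m" and i: "i \<le> m" and s: "s \<in> {1, -1}"
  shows "dc (0 # ins (Suc m) i s u) = dc (0 # u) +
     (if i < m then (if u ! i < (0 # u) ! i then 0 else 1) else (if s = 1 then 0 else 1))"
proof -
  have len: "length u = m" using u by (simp add: W_def)
  define xs where "xs = 0 # take i u"
  have xl: "last xs = (0 # u) ! i" unfolding xs_def by (rule last_take0) (simp add: i len)
  have bl: "abs (last xs) \<le> int m"
  proof (cases i)
    case 0 thus ?thesis using xl by simp
  next
    case (Suc k) hence "(0 # u) ! i \<in> set u" using i len by simp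
    thus ?thesis using xl W_abs[OF u] by simp
  qed
  have e1: "0 # ins (Suc m) i s u = xs @ (s * int (Suc m)) # drop i u" by (simp add: xs_def ins_def)
  have xne: "xs \<noteq> []" by (simp add: xs_def)
  show ?thesis
  proof (cases "i < m")
    case True
    have dr: "drop i u = u ! i # drop (Suc i) u" using True len by (simp add: Cons_nth_drop_Suc)
    have bu: "abs (u ! i) \<le> int m" using W_abs[OF u] True len by simp
    have o: "0 # u = xs @ u ! i # drop (Suc i) u" by (simp add: xs_def dr[symmetric])
    have "dc (0 # u) = dc xs + (if u ! i < last xs then 1 else 0) + dc (u ! i # drop (Suc i) u)"
      unfolding o using dc_append[OF xne] by simp
    moreover have "dc (0 # ins (Suc m) i s u) = dc xs + (if s * int (Suc m) < last xs then 1 else 0)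
       + ((if u ! i < s * int (Suc m) then 1 else 0) + dc (u ! i # drop (Suc i) u))"
      unfolding e1 dr using dc_append[OF xne] by simp
    ultimately show ?thesis using True s bl bu xl by auto
  next
    case False
    hence im: "i = m" using i by simp
    have "dc (0 # ins (Suc m) i s u) = dc xs + (if s * int (Suc m) < last xs then 1 else 0)"
      unfolding e1 using dc_append[OF xne, of "s * int (Suc m)" "[]"] im len by simp
    moreover have "0 # u = xs" using im len by (simp add: xs_def)
    ultimately show ?thesis using False s bl by auto
  qed
qed

lemma last_ins:
  assumes u: "u \<in> W m" and i: "i \<le> m"
  shows "last (ins (Suc m) i s u) = (if i < m then last u else s * int (Suc m))"
proof -
  have len: "length u = m" using u by (simp add: W_def)
  show ?thesis
  proof (cases "i < m")
    case True
    hence "drop i u \<noteq> []" using len by simp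
    hence "last (ins (Suc m) i s u) = last (drop i u)" by (simp add: ins_def)
    also have "\<dots> = last u" using True len by (simp add: last_drop)
    finally show ?thesis using True by simp
  qed (use i len in \<open>simp add: ins_def\<close>)
qed

lemma dc_count:
  assumes u: "u \<in> W m"
  shows "dc (0 # u) = card {i \<in> {..<m}. u ! i < (0 # u) ! i}"
proof -
  have len: "length u = m" using u by (simp add: W_def)
  have "{i. Suc i < length (0 # u) \<and> (0 # u) ! Suc i < (0 # u) ! i} = {i \<in> {..<m}. u ! i < (0 # u) ! i}"
    using len by auto
  thus ?thesis by (simp add: dc_card)
qed

lemma sum_asc:
  assumes u: "u \<in> W m"
  shows "(\<Sum>i<m. monom (1::int) (dc (0 # u) + (if u ! i < (0 # u) ! i then 0 else 1)))
     = of_nat (dc (0 # u)) * monom 1 (dc (0 # u)) + of_nat (m - dc (0 # u)) * monom 1 (Suc (dc (0 # u)))"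
proof -
  define d where "d = dc (0 # u)"
  define P where "P i = (u ! i < (0 # u) ! i)" for i
  have cP: "card {i \<in> {..<m}. P i} = d" using dc_count[OF u] by (simp add: d_def P_def)
  have cN: "card {i \<in> {..<m}. \<not> P i} = m - d"
  proof -
    have "{i \<in> {..<m}. \<not> P i} = {..<m} - {i \<in> {..<m}. P i}" by auto
    thus ?thesis using cP card_Diff_subset[of "{i \<in> {..<m}. P i}" "{..<m}"] by auto
  qed
  have "(\<Sum>i<m. monom (1::int) (d + (if P i then 0 else 1)))
      = (\<Sum>i<m. if P i then monom 1 d else monom 1 (Suc d))"
    by (rule sum.cong) auto
  also have "\<dots> = (\<Sum>i\<in>{i \<in> {..<m}. P i}. monom 1 d) + (\<Sum>i\<in>{i \<in> {..<m}. \<not> P i}. monom 1 (Suc d))"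
    by (simp add: sum.If_cases Int_def conj_commute)
  also have "\<dots> = of_nat d * monom 1 d + of_nat (m - d) * monom 1 (Suc d)"
    using cP cN by simp
  finally show ?thesis by (simp add: d_def P_def)
qed

definition Bsig :: "int \<Rightarrow> nat \<Rightarrow> int poly" where
  "Bsig \<sigma> m = (\<Sum>u\<in>W m. if \<sigma> * last u > 0 then monom 1 (dc (0 # u)) else 0)"

lemma Bplus_sig: "m \<ge> 1 \<Longrightarrow> Bplus m = Bsig 1 m"
  by (simp add: Bplus_W Bsig_def)

lemma Bminus_sig: "m \<ge> 1 \<Longrightarrow> Bminus m = Bsig (-1) m"
  by (simp add: Bminus_W Bsig_def)

lemma dc_le: "u \<in> W m \<Longrightarrow> dc (0 # u) \<le> m"
proof -
  assume u: "u \<in> W m"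
  have "card {i \<in> {..<m}. u ! i < (0 # u) ! i} \<le> card {..<m}" by (rule card_mono) auto
  thus ?thesis using dc_count[OF u] by simp
qed

lemma card2: "card {1, -1::int} = 2" by simp

lemma core:
  assumes \<sigma>: "\<sigma> \<in> {1, -1}"
  shows "Bsig \<sigma> (Suc m) = (\<Sum>u\<in>W m. if \<sigma> * last u > 0 then
      2 * (of_nat (dc (0 # u)) * monom (1::int) (dc (0 # u)) + of_nat (m - dc (0 # u)) * monom (1::int) (Suc (dc (0 # u)))) else 0)
    + (if \<sigma> = 1 then 1 else [:0, 1:]) * Bpoly m"
proof -
  define f where "f v = (if \<sigma> * last v > 0 then monom (1::int) (dc (0 # v)) else 0)" for v
  define asc where "asc (u::int list) i = (if u ! i < (0 # u) ! i then 0 else (1::nat))" for u i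
  have "Bsig \<sigma> (Suc m) = (\<Sum>v\<in>W (Suc m). f v)" by (simp add: Bsig_def f_def)
  also have "\<dots> = (\<Sum>x\<in>{..m} \<times> {1, -1} \<times> W m. f ((\<lambda>(i, s, u). ins (Suc m) i s u) x))"
    by (rule sum.reindex_bij_betw[OF bij_ins, symmetric])
  also have "\<dots> = (\<Sum>i\<in>{..m}. \<Sum>s\<in>{1,-1::int}. \<Sum>u\<in>W m. f (ins (Suc m) i s u))"
    by (simp add: sum.cartesian_product prod.case_distrib)
  also have "\<dots> = (\<Sum>i\<in>{..m}. \<Sum>s\<in>{1,-1::int}. \<Sum>u\<in>W m.
      if i < m then (if \<sigma> * last u > 0 then monom (1::int) (dc (0 # u) + asc u i) else 0)
      else (if s = \<sigma> then monom (1::int) (dc (0 # u) + (if s = 1 then 0 else 1)) else 0))"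
  proof (intro sum.cong refl)
    fix i s u assume i: "i \<in> {..m}" and s: "s \<in> {1, -1::int}" and u: "u \<in> W m"
    have "\<sigma> * (s * int (Suc m)) > 0 \<longleftrightarrow> s = \<sigma>" using s \<sigma> by (auto simp: mult_pos_neg mult_neg_neg zero_less_mult_iff)
    thus "f (ins (Suc m) i s u) = (if i < m then (if \<sigma> * last u > 0 then monom (1::int) (dc (0 # u) + asc u i) else 0)
      else (if s = \<sigma> then monom (1::int) (dc (0 # u) + (if s = 1 then 0 else 1)) else 0))"
      unfolding f_def using last_ins[OF u, of i s] dc_ins[OF u _ s, of i] i by (auto simp: asc_def)
  qed
  also have "\<dots> = (\<Sum>i<m. \<Sum>s\<in>{1,-1::int}. \<Sum>u\<in>W m. (if \<sigma> * last u > 0 then monom (1::int) (dc (0 # u) + asc u i) else 0))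
      + (\<Sum>s\<in>{1,-1::int}. \<Sum>u\<in>W m. (if s = \<sigma> then monom (1::int) (dc (0 # u) + (if s = 1 then 0 else 1)) else 0))"
    using card2 by (simp add: lessThan_Suc_atMost[symmetric])
  also have "(\<Sum>s\<in>{1,-1::int}. \<Sum>u\<in>W m. (if s = \<sigma> then monom (1::int) (dc (0 # u) + (if s = 1 then 0 else 1)) else 0))
      = (if \<sigma> = 1 then 1 else [:0, 1:]) * Bpoly m"
    using \<sigma> by (auto simp: Bpoly_W sum_distrib_left monom_Suc)
  also have "(\<Sum>i<m. \<Sum>s\<in>{1,-1::int}. \<Sum>u\<in>W m. (if \<sigma> * last u > 0 then monom (1::int) (dc (0 # u) + asc u i) else 0))
     = (\<Sum>u\<in>W m. if \<sigma> * last u > 0 then 2 * (\<Sum>i<m. monom (1::int) (dc (0 # u) + asc u i)) else 0)"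
    by (simp add: sum_distrib_left, subst sum.swap) (auto intro!: sum.cong simp: sum_distrib_left)
  also have "\<dots> = (\<Sum>u\<in>W m. if \<sigma> * last u > 0 then
      2 * (of_nat (dc (0 # u)) * monom (1::int) (dc (0 # u)) + of_nat (m - dc (0 # u)) * monom (1::int) (Suc (dc (0 # u)))) else 0)"
  proof (intro sum.cong refl)
    fix u assume u: "u \<in> W m"
    show "(if \<sigma> * last u > 0 then 2 * (\<Sum>i<m. monom (1::int) (dc (0 # u) + asc u i)) else 0) =
      (if \<sigma> * last u > 0 then
      2 * (of_nat (dc (0 # u)) * monom (1::int) (dc (0 # u)) + of_nat (m - dc (0 # u)) * monom (1::int) (Suc (dc (0 # u)))) else 0)"
      using sum_asc[OF u, folded asc_def] by (simp del: One_nat_def)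
  qed
  finally show ?thesis .
qed

lemma term_id:
  assumes "d \<le> m"
  shows "2 * (of_nat d * monom (1::int) d + of_nat (m - d) * monom 1 (Suc d)) =
    smult (2 * int m) [:0, 1:] * monom 1 d + smult 2 ([:0, 1:] * [:1, -1:]) * pderiv (monom 1 d)"
proof (rule poly_eq_poly_eq_iff[THEN iffD1], rule ext)
  fix x :: int
  show "poly (2 * (of_nat d * monom (1::int) d + of_nat (m - d) * monom 1 (Suc d))) x =
    poly (smult (2 * int m) [:0, 1:] * monom 1 d + smult 2 ([:0, 1:] * [:1, -1:]) * pderiv (monom 1 d)) x"
  proof (cases d)
    case 0 thus ?thesis by (simp add: poly_monom of_nat_poly)
  next
    case (Suc e)
    thus ?thesis using assms by (simp add: poly_monom of_nat_poly pderiv_monom of_nat_diff algebra_simps)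
  qed
qed

lemma pderiv_sum: "pderiv (sum f A) = (\<Sum>x\<in>A. pderiv (f x))"
  by (induction A rule: infinite_finite_induct) (simp_all add: pderiv_add)

lemma pderiv_if0: "pderiv (if P then p else 0) = (if P then pderiv p else 0)" by simp

lemma sig_split:
  "smult (2 * int m) [:0, 1:] * Bsig \<sigma> m + smult 2 ([:0, 1:] * [:1, -1:]) * pderiv (Bsig \<sigma> m) =
   (\<Sum>u\<in>W m. if \<sigma> * last u > 0 then smult (2 * int m) [:0, 1:] * monom 1 (dc (0 # u))
      + smult 2 ([:0, 1:] * [:1, -1:]) * pderiv (monom 1 (dc (0 # u))) else 0)"
  unfolding Bsig_def pderiv_sum sum_distrib_left sum.distrib[symmetric] by (intro sum.cong refl) simp

lemma rec_gen:
  assumes \<sigma>: "\<sigma> \<in> {1, -1}" and m: "m \<ge> 1"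
  shows "Bsig \<sigma> (Suc m) = smult (2 * int m) [:0, 1:] * Bsig \<sigma> m + smult 2 ([:0, 1:] * [:1, -1:]) * pderiv (Bsig \<sigma> m)
     + (if \<sigma> = 1 then 1 else [:0, 1:]) * Bpoly m"
  unfolding core[OF \<sigma>] sig_split
proof (intro arg_cong2[where f="(+)"] sum.cong refl)
  fix u assume u: "u \<in> W m"
  show "(if \<sigma> * last u > 0 then 2 * (of_nat (dc (0 # u)) * monom (1::int) (dc (0 # u)) + of_nat (m - dc (0 # u)) * monom 1 (Suc (dc (0 # u)))) else 0)
     = (if \<sigma> * last u > 0 then smult (2 * int m) [:0, 1:] * monom 1 (dc (0 # u))
      + smult 2 ([:0, 1:] * [:1, -1:]) * pderiv (monom 1 (dc (0 # u))) else 0)"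
    by (simp only: term_id[OF dc_le[OF u]])
qed

lemma rec0: "Bsig \<sigma> (Suc 0) = (if \<sigma> = 1 then 1 else [:0, 1:]) * Bpoly 0" if "\<sigma> \<in> {1, -1}"
proof -
  have "(\<Sum>u\<in>W 0. if \<sigma> * last u > 0 then
      2 * (of_nat (dc (0 # u)) * monom (1::int) (dc (0 # u)) + of_nat (0 - dc (0 # u)) * monom 1 (Suc (dc (0 # u)))) else 0) = 0"
    by (rule sum.neutral) (use dc_le[of _ 0] in auto)
  thus ?thesis using core[OF that, of 0] by simp
qed

lemma rec_plus: "Bplus (Suc m) = smult (2 * int m) [:0, 1:] * Bplus m + smult 2 ([:0, 1:] * [:1, -1:]) * pderiv (Bplus m) + Bpoly m"
proof (cases "m = 0")
  case True thus ?thesis using rec0[of 1] Bplus_sig[of 1] by (simp add: Bplus_def)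
next
  case False thus ?thesis using rec_gen[of 1 m] Bplus_sig[of m] Bplus_sig[of "Suc m"] by simp
qed

lemma rec_minus: "Bminus (Suc m) = smult (2 * int m) [:0, 1:] * Bminus m + smult 2 ([:0, 1:] * [:1, -1:]) * pderiv (Bminus m) + [:0, 1:] * Bpoly m"
proof (cases "m = 0")
  case True thus ?thesis using rec0[of "-1"] Bminus_sig[of 1] by (simp add: Bminus_def)
next
  case False thus ?thesis using rec_gen[of "-1" m] Bminus_sig[of m] Bminus_sig[of "Suc m"] by simp
qed

lemma Bpoly0: "Bpoly 0 = 1"
proof -
  have "W 0 = {[]}" by (auto simp: W_def)
  thus ?thesis by (simp add: Bpoly_W)
qed

definition bet :: "nat \<Rightarrow> int fps" where
  "bet n = Abs_fps (\<lambda>j. (2 * int j + 1) ^ n - (if j = 0 then 0 else (2 * int j) ^ n))"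
definition gam :: "nat \<Rightarrow> int fps" where
  "gam n = Abs_fps (\<lambda>j. if j = 0 then 0 else (2 * int j) ^ n - (2 * int j - 1) ^ n)"
definition alp :: "nat \<Rightarrow> int fps" where
  "alp n = Abs_fps (\<lambda>j. (2 * int j + 1) ^ n)"

lemma bg_alp: "bet n + gam n = (1 - fps_X) * alp n"
proof (rule fps_ext)
  fix j show "(bet n + gam n) $ j = ((1 - fps_X) * alp n) $ j"
  proof (cases j)
    case (Suc i)
    have "2 * int (Suc i) - 1 = 2 * int i + 1" by simp
    thus ?thesis using Suc by (simp add: bet_def gam_def alp_def algebra_simps)
  qed (simp add: bet_def gam_def alp_def algebra_simps)
qed

lemma Xderiv: "fps_X * fps_deriv f = Abs_fps (\<lambda>j. of_nat j * f $ j)"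
  by (rule fps_ext) (auto simp: gr0_conv_Suc)

lemma bet_rec: "bet (Suc n) = 2 * (fps_X * fps_deriv (bet n)) + alp n"
  unfolding Xderiv by (rule fps_ext) (simp add: bet_def alp_def algebra_simps numeral_fps_const)

lemma gam_rec: "gam (Suc n) = 2 * (fps_X * fps_deriv (gam n)) + fps_X * alp n"
  unfolding Xderiv
proof (rule fps_ext)
  fix j show "gam (Suc n) $ j = (2 * Abs_fps (\<lambda>j. of_nat j * gam n $ j) + fps_X * alp n) $ j"
  proof (cases j)
    case (Suc i)
    have "2 * int (Suc i) - 1 = 2 * int i + 1" by simp
    thus ?thesis using Suc by (simp add: gam_def alp_def algebra_simps numeral_fps_const)
  qed (simp add: gam_def alp_def numeral_fps_const)
qed

lemma deriv_pow: "fps_deriv ((1 - fps_X :: int fps) ^ n) * (1 - fps_X) = - of_nat n * (1 - fps_X) ^ n"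
proof (cases n)
  case (Suc m)
  have "fps_deriv ((1 - fps_X :: int fps) ^ Suc m) = of_nat (Suc m) * fps_deriv (1 - fps_X) * (1 - fps_X) ^ m"
    using fps_deriv_power'[of "1 - fps_X :: int fps" "Suc m"] by simp
  also have "\<dots> = - of_nat (Suc m) * (1 - fps_X) ^ m" by simp
  finally have "fps_deriv ((1 - fps_X :: int fps) ^ Suc m) * (1 - fps_X) = - of_nat (Suc m) * (1 - fps_X) ^ m * (1 - fps_X)"
    by simp
  also have "\<dots> = - of_nat (Suc m) * (1 - fps_X) ^ Suc m" by (simp only: power_Suc2 mult.assoc)
  finally show ?thesis using Suc by simp
qed simp

lemma fps_pm: "fps_of_poly [:1, -1:] = (1 - fps_X :: int fps)"
  by (simp add: fps_of_poly_pCons fps_const_neg)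

lemma Bpoly_pm: "Bpoly n = Bplus n + Bminus n"
  by (cases n) (simp_all add: Bpoly0 Bplus_def Bminus_def Bpoly_split)

lemma fps_B: "fps_of_poly (Bplus n) = (1 - fps_X) ^ n * bet n \<and> fps_of_poly (Bminus n) = (1 - fps_X) ^ n * gam n"
proof (induction n)
  case 0
  have "bet 0 = 1" by (rule fps_ext) (simp add: bet_def)
  moreover have "gam 0 = 0" by (rule fps_ext) (simp add: gam_def)
  ultimately show ?case by (simp add: Bplus_def Bminus_def)
next
  case (Suc n)
  define Y where "Y = (1 - fps_X :: int fps)"
  have IH1: "fps_of_poly (Bplus n) = Y ^ n * bet n" and IH2: "fps_of_poly (Bminus n) = Y ^ n * gam n"
    using Suc by (simp_all add: Y_def)
  have dY: "fps_deriv (Y ^ n) * Y = - of_nat n * Y ^ n" unfolding Y_def by (rule deriv_pow)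
  have BP: "fps_of_poly (Bpoly n) = Y ^ Suc n * alp n"
  proof -
    have "fps_of_poly (Bpoly n) = Y ^ n * (bet n + gam n)"
      using IH1 IH2 by (simp add: Bpoly_pm fps_of_poly_add distrib_left)
    also have "\<dots> = Y ^ Suc n * alp n" by (simp add: bg_alp Y_def)
    finally show ?thesis .
  qed
  have key: "fps_const (2 * int n) * fps_X * (Y ^ n * f) + fps_const 2 * (fps_X * Y) * fps_deriv (Y ^ n * f)
     = 2 * (Y ^ Suc n * (fps_X * fps_deriv f))" for f
  proof -
    have "fps_const 2 * (fps_X * Y) * fps_deriv (Y ^ n * f) =
       2 * fps_X * (fps_deriv (Y ^ n) * Y) * f + 2 * (Y ^ Suc n * (fps_X * fps_deriv f))"
      by (simp add: numeral_fps_const[symmetric] algebra_simps)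
    also have "\<dots> = - (2 * of_nat n * fps_X * Y ^ n * f) + 2 * (Y ^ Suc n * (fps_X * fps_deriv f))"
      unfolding dY by (simp add: algebra_simps)
    finally show ?thesis by (simp add: fps_const_mult fps_of_nat[symmetric] numeral_fps_const algebra_simps)
  qed
  have "fps_of_poly (Bplus (Suc n)) = Y ^ Suc n * bet (Suc n)"
    unfolding rec_plus fps_of_poly_add fps_of_poly_mult fps_of_poly_smult fps_of_poly_pderiv fps_pm
      fps_of_poly_fps_X IH1 BP
    using key[of "bet n"] by (simp add: bet_rec Y_def algebra_simps)
  moreover have "fps_of_poly (Bminus (Suc n)) = Y ^ Suc n * gam (Suc n)"
    unfolding rec_minus fps_of_poly_add fps_of_poly_mult fps_of_poly_smult fps_of_poly_pderiv fps_pm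
      fps_of_poly_fps_X IH2 BP
    using key[of "gam n"] by (simp add: gam_rec Y_def algebra_simps)
  ultimately show ?case by (simp add: Y_def)
qed

lemma binom_int: "(\<Sum>k\<le>n. of_nat (n choose k) * 2 ^ (n - k) * (a::int) ^ k) = (a + 2) ^ n"
  by (simp add: binomial_ring mult_ac)

lemma sum_bet: "(\<Sum>k\<le>n. fps_const (of_nat (n choose k) * 2 ^ (n - k)) * bet k) =
   Abs_fps (\<lambda>j. (2 * int j + 3) ^ n - (if j = 0 then 0 else (2 * int j + 2) ^ n))"
proof (rule fps_ext)
  fix j
  have "(\<Sum>k\<le>n. fps_const (of_nat (n choose k) * 2 ^ (n - k)) * bet k) $ j =
     (\<Sum>k\<le>n. of_nat (n choose k) * 2 ^ (n - k) * (2 * int j + 1) ^ k)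
     - (if j = 0 then 0 else (\<Sum>k\<le>n. of_nat (n choose k) * 2 ^ (n - k) * (2 * int j) ^ k))"
    by (simp add: fps_sum_nth bet_def algebra_simps sum_subtractf sum_distrib_left)
  also have "\<dots> = (2 * int j + 3) ^ n - (if j = 0 then 0 else (2 * int j + 2) ^ n)"
    unfolding binom_int by (simp add: algebra_simps)
  finally show "(\<Sum>k\<le>n. fps_const (of_nat (n choose k) * 2 ^ (n - k)) * bet k) $ j =
     Abs_fps (\<lambda>j. (2 * int j + 3) ^ n - (if j = 0 then 0 else (2 * int j + 2) ^ n)) $ j" by simp
qed

lemma sum_gam: "(\<Sum>k\<le>n. fps_const (of_nat (n choose k) * 2 ^ (n - k)) * gam k) =
   Abs_fps (\<lambda>j. if j = 0 then 0 else (2 * int j + 2) ^ n - (2 * int j + 1) ^ n)"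
proof (rule fps_ext)
  fix j
  have "(\<Sum>k\<le>n. fps_const (of_nat (n choose k) * 2 ^ (n - k)) * gam k) $ j =
     (if j = 0 then 0 else (\<Sum>k\<le>n. of_nat (n choose k) * 2 ^ (n - k) * (2 * int j) ^ k)
     - (\<Sum>k\<le>n. of_nat (n choose k) * 2 ^ (n - k) * (2 * int j - 1) ^ k))"
    by (simp add: fps_sum_nth gam_def algebra_simps sum_subtractf sum_distrib_left)
  also have "\<dots> = (if j = 0 then 0 else (2 * int j + 2) ^ n - (2 * int j + 1) ^ n)"
    unfolding binom_int by (simp add: algebra_simps)
  finally show "(\<Sum>k\<le>n. fps_const (of_nat (n choose k) * 2 ^ (n - k)) * gam k) $ j =
     Abs_fps (\<lambda>j. if j = 0 then 0 else (2 * int j + 2) ^ n - (2 * int j + 1) ^ n) $ j" by simp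
qed

lemma K_bet: "bet n - fps_X * (\<Sum>k\<le>n. fps_const (of_nat (n choose k) * 2 ^ (n - k)) * bet k)
   = 1 - fps_const (2 ^ n) * fps_X"
  unfolding sum_bet
proof (rule fps_ext)
  fix j show "(bet n - fps_X * Abs_fps (\<lambda>j. (2 * int j + 3) ^ n - (if j = 0 then 0 else (2 * int j + 2) ^ n))) $ j
      = (1 - fps_const (2 ^ n) * fps_X) $ j"
  proof (cases j)
    case (Suc i)
    have "2 * int i + 3 = 2 * int (Suc i) + 1" "2 * int i + 2 = 2 * int (Suc i)" by simp_all
    thus ?thesis using Suc by (cases i) (auto simp: bet_def)
  qed (simp add: bet_def)
qed

lemma K_gam: "gam n - fps_X * (\<Sum>k\<le>n. fps_const (of_nat (n choose k) * 2 ^ (n - k)) * gam k)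
   = fps_const (2 ^ n - 1) * fps_X"
  unfolding sum_gam
proof (rule fps_ext)
  fix j show "(gam n - fps_X * Abs_fps (\<lambda>j. if j = 0 then 0 else (2 * int j + 2) ^ n - (2 * int j + 1) ^ n)) $ j
      = (fps_const (2 ^ n - 1) * fps_X) $ j"
  proof (cases j)
    case (Suc i)
    have "2 * int i + 2 = 2 * int (Suc i)" "2 * int i + 1 = 2 * int (Suc i) - 1" by simp_all
    thus ?thesis using Suc by (cases i) (auto simp: gam_def)
  qed (simp add: gam_def)
qed

lemma fps_22: "fps_of_poly [:2, -2:] = (fps_const 2 * (1 - fps_X) :: int fps)"
  by (simp add: fps_of_poly_pCons fps_const_neg algebra_simps numeral_fps_const)

lemma sum_conv:
  fixes P :: "nat \<Rightarrow> int poly"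
  assumes "\<And>k. fps_of_poly (P k) = (1 - fps_X) ^ k * f k"
  shows "fps_of_poly (\<Sum>k\<le>n. smult (of_nat (n choose k)) ([:2, -2:] ^ (n - k)) * P k)
     = (1 - fps_X) ^ n * (\<Sum>k\<le>n. fps_const (of_nat (n choose k) * 2 ^ (n - k)) * f k)"
  unfolding fps_of_poly_sum sum_distrib_left
proof (rule sum.cong[OF refl])
  fix k assume k: "k \<in> {..n}"
  have Yp: "(1 - fps_X :: int fps) ^ (n - k) * (1 - fps_X) ^ k = (1 - fps_X) ^ n"
    using k by (simp add: power_add[symmetric])
  have "fps_of_poly (smult (of_nat (n choose k)) ([:2, -2:] ^ (n - k)) * P k)
     = fps_const (of_nat (n choose k)) * ((fps_const 2 * (1 - fps_X)) ^ (n - k)) * ((1 - fps_X) ^ k * f k)"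
    by (simp only: fps_of_poly_mult fps_of_poly_smult fps_of_poly_power fps_22 assms)
  also have "\<dots> = fps_const (of_nat (n choose k) * 2 ^ (n - k)) * ((1 - fps_X) ^ (n - k) * (1 - fps_X) ^ k) * f k"
    by (simp only: power_mult_distrib fps_const_power fps_const_mult[symmetric] mult_ac)
  also have "\<dots> = (1 - fps_X) ^ n * (fps_const (of_nat (n choose k) * 2 ^ (n - k)) * f k)"
    unfolding Yp by (simp only: mult_ac)
  finally show "fps_of_poly (smult (of_nat (n choose k)) ([:2, -2:] ^ (n - k)) * P k) =
     (1 - fps_X) ^ n * (fps_const (of_nat (n choose k) * 2 ^ (n - k)) * f k)" .
qed

lemma Kp: "Bplus n - [:0, 1:] * (\<Sum>k\<le>n. smult (of_nat (n choose k)) ([:2, -2:] ^ (n - k)) * Bplus k)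
   = [:1, -1:] ^ n - [:0, 1:] * [:2, -2:] ^ n"
proof -
  have "fps_of_poly (Bplus n - [:0, 1:] * (\<Sum>k\<le>n. smult (of_nat (n choose k)) ([:2, -2:] ^ (n - k)) * Bplus k))
    = (1 - fps_X) ^ n * (bet n - fps_X * (\<Sum>k\<le>n. fps_const (of_nat (n choose k) * 2 ^ (n - k)) * bet k))"
  proof -
    have h: "\<And>k. fps_of_poly (Bplus k) = (1 - fps_X) ^ k * bet k" using fps_B by simp
    have "fps_of_poly (Bplus n - [:0, 1:] * (\<Sum>k\<le>n. smult (of_nat (n choose k)) ([:2, -2:] ^ (n - k)) * Bplus k))
      = fps_of_poly (Bplus n) - fps_X * fps_of_poly (\<Sum>k\<le>n. smult (of_nat (n choose k)) ([:2, -2:] ^ (n - k)) * Bplus k)"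
      by (simp only: fps_of_poly_diff fps_of_poly_mult fps_of_poly_fps_X)
    also have "\<dots> = (1 - fps_X) ^ n * bet n - fps_X * ((1 - fps_X) ^ n * (\<Sum>k\<le>n. fps_const (of_nat (n choose k) * 2 ^ (n - k)) * bet k))"
      by (simp only: h sum_conv[OF h])
    finally show ?thesis by (simp add: algebra_simps)
  qed
  also have "\<dots> = fps_of_poly ([:1, -1:] ^ n - [:0, 1:] * [:2, -2:] ^ n)"
    unfolding K_bet by (simp only: fps_of_poly_diff fps_of_poly_mult fps_of_poly_power fps_22 fps_pm
       fps_of_poly_fps_X power_mult_distrib fps_const_power) (simp add: algebra_simps)
  finally show ?thesis by (simp only: fps_of_poly_eq_iff)
qed

lemma Km: "Bminus n - [:0, 1:] * (\<Sum>k\<le>n. smult (of_nat (n choose k)) ([:2, -2:] ^ (n - k)) * Bminus k)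
   = [:0, 1:] * ([:2, -2:] ^ n - [:1, -1:] ^ n)"
proof -
  have "fps_of_poly (Bminus n - [:0, 1:] * (\<Sum>k\<le>n. smult (of_nat (n choose k)) ([:2, -2:] ^ (n - k)) * Bminus k))
    = (1 - fps_X) ^ n * (gam n - fps_X * (\<Sum>k\<le>n. fps_const (of_nat (n choose k) * 2 ^ (n - k)) * gam k))"
  proof -
    have h: "\<And>k. fps_of_poly (Bminus k) = (1 - fps_X) ^ k * gam k" using fps_B by simp
    have "fps_of_poly (Bminus n - [:0, 1:] * (\<Sum>k\<le>n. smult (of_nat (n choose k)) ([:2, -2:] ^ (n - k)) * Bminus k))
      = fps_of_poly (Bminus n) - fps_X * fps_of_poly (\<Sum>k\<le>n. smult (of_nat (n choose k)) ([:2, -2:] ^ (n - k)) * Bminus k)"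
      by (simp only: fps_of_poly_diff fps_of_poly_mult fps_of_poly_fps_X)
    also have "\<dots> = (1 - fps_X) ^ n * gam n - fps_X * ((1 - fps_X) ^ n * (\<Sum>k\<le>n. fps_const (of_nat (n choose k) * 2 ^ (n - k)) * gam k))"
      by (simp only: h sum_conv[OF h])
    finally show ?thesis by (simp add: algebra_simps)
  qed
  also have "\<dots> = fps_of_poly ([:0, 1:] * ([:2, -2:] ^ n - [:1, -1:] ^ n))"
    unfolding K_gam by (simp only: fps_of_poly_diff fps_of_poly_mult fps_of_poly_power fps_22 fps_pm
       fps_of_poly_fps_X power_mult_distrib fps_const_power) (simp add: algebra_simps fps_const_sub[symmetric])
  finally show ?thesis by (simp only: fps_of_poly_eq_iff)
qed

instance fract :: ("{idom,ring_char_0}") ring_char_0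
proof
  show "inj (of_nat :: nat \<Rightarrow> 'a fract)"
  proof (rule injI)
    fix m n assume "(of_nat m :: 'a fract) = of_nat n"
    hence "Fract (of_nat m :: 'a) 1 = Fract (of_nat n) 1" by (simp add: of_nat_fract)
    hence "(of_nat m :: 'a) = of_nat n" by (simp add: eq_fract)
    thus "m = n" by simp
  qed
qed

lemma to_fract_power: "to_fract (x ^ n) = to_fract x ^ n"
  by (induction n) simp_all
lemma to_fract_of_nat: "to_fract (of_nat n) = of_nat n"
  by (induction n) simp_all
lemma smult_of_nat: "smult (of_nat c) p = (of_nat c * p :: int poly)"
  by (simp add: of_nat_poly)

lemma to_fract_sum: "to_fract (sum f A) = (\<Sum>x\<in>A. to_fract (f x))"
  by (induction A rule: infinite_finite_induct) simp_all

lemma to_fract_22: "to_fract [:2, -2:] = 2 * (1 - xF)"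
proof -
  have "[:2, -2:] = (1 - [:0, 1:]) + (1 - [:0, 1:] :: int poly)" by (simp add: one_pCons)
  hence "to_fract [:2, -2:] = (1 - xF) + (1 - xF)"
    by (simp only: to_fract_add to_fract_diff to_fract_1 xF_def)
  thus ?thesis by simp
qed

lemma to_fract_11: "to_fract [:1, -1:] = 1 - xF"
proof -
  have "[:1, -1:] = (1 - [:0, 1:] :: int poly)" by (simp add: one_pCons)
  thus ?thesis by (simp only: to_fract_add to_fract_diff to_fract_1 xF_def)
qed

lemma egfE:
  assumes Q: "\<And>n. P n - [:0, 1:] * (\<Sum>k\<le>n. smult (of_nat (n choose k)) ([:2, -2:] ^ (n - k)) * P k) = Q n"
  shows "egf P * (1 - fps_const xF * fps_exp (2 * (1 - xF))) = Abs_fps (\<lambda>n. to_fract (Q n) / fact n)"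
proof (rule fps_ext)
  fix n
  define c where "c = 2 * (1 - xF)"
  have TQ: "to_fract (Q n) = to_fract (P n) - xF * (\<Sum>k\<le>n. of_nat (n choose k) * c ^ (n - k) * to_fract (P k))"
  proof -
    have "to_fract (Q n) = to_fract (P n - [:0, 1:] * (\<Sum>k\<le>n. smult (of_nat (n choose k)) ([:2, -2:] ^ (n - k)) * P k))"
      using Q[of n] by simp
    also have "\<dots> = to_fract (P n) - xF * (\<Sum>k\<le>n. of_nat (n choose k) * c ^ (n - k) * to_fract (P k))"
      by (simp only: to_fract_diff to_fract_mult to_fract_sum smult_of_nat to_fract_power to_fract_of_nat
         to_fract_22 xF_def[symmetric] c_def[symmetric])
    finally show ?thesis .
  qed
  have S: "(\<Sum>i=0..n. egf P $ i * fps_exp c $ (n - i)) = (\<Sum>k\<le>n. of_nat (n choose k) * c ^ (n - k) * to_fract (P k)) / fact n"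
    unfolding sum_divide_distrib atMost_atLeast0
  proof (rule sum.cong[OF refl])
    fix k assume k: "k \<in> {0..n}"
    have "of_nat (n choose k) / (fact n :: int poly fract) = 1 / (fact k * fact (n - k))"
      using k by (simp add: binomial_fact)
    thus "egf P $ k * fps_exp c $ (n - k) = of_nat (n choose k) * c ^ (n - k) * to_fract (P k) / fact n"
      using k by (simp add: egf_def field_simps)
  qed
  have "(egf P * (1 - fps_const xF * fps_exp c)) $ n = egf P $ n - xF * (\<Sum>i=0..n. egf P $ i * fps_exp c $ (n - i))"
  proof -
    have e: "egf P * (1 - fps_const xF * fps_exp c) = egf P - fps_const xF * (egf P * fps_exp c)"
      by (simp add: algebra_simps)
    show ?thesis unfolding e by (simp only: fps_sub_nth fps_mult_left_const_nth) (simp only: fps_mult_nth)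
  qed
  also have "\<dots> = to_fract (Q n) / fact n"
    unfolding S TQ by (simp add: egf_def diff_divide_distrib)
  finally show "(egf P * (1 - fps_const xF * fps_exp (2 * (1 - xF)))) $ n = Abs_fps (\<lambda>n. to_fract (Q n) / fact n) $ n"
    by (simp add: c_def)
qed

lemma xF_ne1: "xF \<noteq> 1"
proof
  assume "xF = 1"
  hence "to_fract [:0, 1:] = to_fract (1 :: int poly)" by (simp add: xF_def)
  hence "[:0, 1:] = (1 :: int poly)" by (simp only: to_fract_eq_iff)
  thus False by (simp add: one_pCons)
qed

lemma egf_plus_E: "egf Bplus * (1 - fps_const xF * fps_exp (2 * (1 - xF))) = fps_exp (1 - xF) - fps_const xF * fps_exp (2 * (1 - xF))"
  unfolding egfE[OF Kp]
proof (rule fps_ext)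
  fix n
  have "to_fract ([:1, -1:] ^ n - [:0, 1:] * [:2, -2:] ^ n) = (1 - xF) ^ n - xF * (2 * (1 - xF)) ^ n"
    by (simp only: to_fract_diff to_fract_mult to_fract_power to_fract_11 to_fract_22 xF_def[symmetric])
  thus "Abs_fps (\<lambda>n. to_fract ([:1, -1:] ^ n - [:0, 1:] * [:2, -2:] ^ n) / fact n) $ n =
    (fps_exp (1 - xF) - fps_const xF * fps_exp (2 * (1 - xF))) $ n"
    by (simp only: fps_sub_nth fps_mult_left_const_nth fps_exp_nth fps_nth_Abs_fps of_nat_fact
        diff_divide_distrib times_divide_eq_right)
qed

lemma egf_minus_E: "egf Bminus * (1 - fps_const xF * fps_exp (2 * (1 - xF))) = fps_const xF * (fps_exp (2 * (1 - xF)) - fps_exp (1 - xF))"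
  unfolding egfE[OF Km]
proof (rule fps_ext)
  fix n
  have "to_fract ([:0, 1:] * ([:2, -2:] ^ n - [:1, -1:] ^ n)) = xF * (2 * (1 - xF)) ^ n - xF * (1 - xF) ^ n"
    by (simp only: to_fract_diff to_fract_mult to_fract_power to_fract_11 to_fract_22 xF_def[symmetric] right_diff_distrib)
  thus "Abs_fps (\<lambda>n. to_fract ([:0, 1:] * ([:2, -2:] ^ n - [:1, -1:] ^ n)) / fact n) $ n =
    (fps_const xF * (fps_exp (2 * (1 - xF)) - fps_exp (1 - xF))) $ n"
    by (simp only: fps_sub_nth fps_mult_left_const_nth fps_exp_nth fps_nth_Abs_fps of_nat_fact
        diff_divide_distrib times_divide_eq_right right_diff_distrib)
qed

lemma exp_sum: assumes "a + b = c" shows "fps_exp a * fps_exp b = fps_exp (c :: int poly fract)"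
  using fps_exp_add_mult[of a b] assms by simp

lemma ring_id0: "(A::'a::comm_ring_1) * (1 - K * C) = A - K * (A * C)"
  by (simp add: algebra_simps)

lemma solve:
  assumes e: "egf P * (1 - fps_const xF * fps_exp (2 * (1 - xF))) = M"
    and N: "N = fps_exp (2 * xF) * M"
  shows "egf P = N / (fps_exp (2 * xF) - fps_const xF * fps_exp 2)"
proof -
  define D where "D = fps_exp (2 * xF) - fps_const xF * fps_exp 2"
  have DE: "D = fps_exp (2 * xF) * (1 - fps_const xF * fps_exp (2 * (1 - xF)))"
  proof -
    have "fps_exp (2 * xF) * fps_exp (2 * (1 - xF)) = fps_exp 2"
      by (rule exp_sum) (simp add: algebra_simps)
    thus ?thesis unfolding D_def ring_id0 by simp
  qed
  have D0: "D $ 0 \<noteq> 0" using xF_ne1 by (simp add: D_def)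
  have ND: "N = egf P * D" unfolding N DE e[symmetric] by (simp only: mult_ac)
  have "N / D = N * inverse D" using D0 by (rule fps_divide_unit)
  also have "\<dots> = egf P * (inverse D * D)" unfolding ND by (simp only: mult_ac)
  also have "\<dots> = egf P" using D0 by (simp add: inverse_mult_eq_1)
  finally have "N / D = egf P" .
  thus ?thesis unfolding D_def by (rule sym)
qed

lemma ring_id1: "(A::'a::comm_ring) * (B - K * C) = A * B - K * (A * C)"
  by (simp add: algebra_simps)
lemma ring_id1': "E * F - K * (E * E) = E * (F - K * (E::'a::comm_ring))"
  by (simp add: algebra_simps)
lemma ring_id2: "(A::'a::comm_ring) * (K * (C - B)) = K * (A * C - A * B)"
  by (simp add: algebra_simps)
lemma ring_id2': "K * (E * E - E * F) = K * E * (E - (F::'a::comm_ring))"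
  by (simp add: algebra_simps)

theorem proposition7p7:
  shows "(\<forall>n\<ge>1. Bplus n = smult (2 * (int n - 1)) [:0, 1:] * Bplus (n - 1)
                       + smult 2 ([:0, 1:] * [:1, -1:]) * pderiv (Bplus (n - 1))
                       + Bpoly (n - 1))
   \<and> egf Bplus = fps_exp 1 * (fps_exp xF - fps_const xF * fps_exp 1)
                   / (fps_exp (2 * xF) - fps_const xF * fps_exp 2)
   \<and> egf Bminus = fps_const xF * fps_exp 1 * (fps_exp 1 - fps_exp xF)
                   / (fps_exp (2 * xF) - fps_const xF * fps_exp 2)"
proof (intro conjI allI impI)
  fix n :: nat assume n: "n \<ge> 1"
  then obtain m where m: "n = Suc m" by (cases n) auto
  show "Bplus n = smult (2 * (int n - 1)) [:0, 1:] * Bplus (n - 1)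
                       + smult 2 ([:0, 1:] * [:1, -1:]) * pderiv (Bplus (n - 1))
                       + Bpoly (n - 1)"
    using rec_plus[of m] m by simp
next
  have e1: "fps_exp (2 * xF) * fps_exp (1 - xF) = fps_exp 1 * fps_exp xF"
  proof -
    have "fps_exp (2 * xF) * fps_exp (1 - xF) = fps_exp (1 + xF)" by (rule exp_sum) (simp add: algebra_simps)
    moreover have "fps_exp 1 * fps_exp xF = fps_exp (1 + xF)" by (rule exp_sum) simp
    ultimately show ?thesis by (simp only:)
  qed
  have e2: "fps_exp (2 * xF) * fps_exp (2 * (1 - xF)) = fps_exp 1 * fps_exp (1 :: int poly fract)"
  proof -
    have "fps_exp (2 * xF) * fps_exp (2 * (1 - xF)) = fps_exp 2" by (rule exp_sum) (simp add: algebra_simps)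
    moreover have "fps_exp 1 * fps_exp 1 = fps_exp (2 :: int poly fract)" by (rule exp_sum) simp
    ultimately show ?thesis by (simp only:)
  qed
  have r1: "fps_exp (2 * xF) * (fps_exp (1 - xF) - fps_const xF * fps_exp (2 * (1 - xF)))
      = fps_exp 1 * (fps_exp xF - fps_const xF * fps_exp 1)"
    by (rule trans[OF ring_id1], unfold e1 e2, rule ring_id1')
  have r2: "fps_exp (2 * xF) * (fps_const xF * (fps_exp (2 * (1 - xF)) - fps_exp (1 - xF)))
      = fps_const xF * fps_exp 1 * (fps_exp 1 - fps_exp xF)"
    by (rule trans[OF ring_id2], unfold e1 e2, rule ring_id2')
  show "egf Bplus = fps_exp 1 * (fps_exp xF - fps_const xF * fps_exp 1)
                   / (fps_exp (2 * xF) - fps_const xF * fps_exp 2)"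
    by (rule solve[OF egf_plus_E r1[symmetric]])
  show "egf Bminus = fps_const xF * fps_exp 1 * (fps_exp 1 - fps_exp xF)
                   / (fps_exp (2 * xF) - fps_const xF * fps_exp 2)"
    by (rule solve[OF egf_minus_E r2[symmetric]])
qed

end
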